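(* Let $\Omega\subset\mathbb{R}^N$ be a bounded domain satisfying $(F_j)$ and $(F_{N-j+1})$, let $u_0\in C(\overline\Omega)$ and let $g$ be continuous and time independent with $u_0=g$ on $\partial\Omega$. Suppose there are an affine function $\pi$, a unit vector $w\in\mathbb{R}^N$ and $\theta\in\mathbb{R}$ such that $g(x)=\pi(x)$ for every $x\in\mathbb{R}^N\setminus\Omega$ with $x\cdot w>\theta$. Let $u$ be the viscosity solution of $u_t-\lambda_j(D^2u)=0$ in $\Omega\times(0,\infty)$, $u=g$ on $\partial\Omega\times(0,\infty)$, $u(\cdot,0)=u_0$. Then for every $y\in\Omega$ with $y\cdot w>\theta$ there exists $t_y>0$ such that: if $1\le j\le N-1$, then $u(y,t)\le\pi(y)$ for all $t>t_y$; and if $2\le j\le N$, then $u(y,t)\ge\pi(y)$ for all $t>t_y$. In particular, for $2\le j\le N-1$, $u(y,t)=\pi(y)$ for all $t>t_y$.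
   Context: $\lambda_j(A)$ is the $j$-th smallest eigenvalue of a symmetric matrix $A$, $\lambda_j(A)=\inf_{\dim S=j}\sup_{v\in S,|v|=1}\langle Av,v\rangle$; solutions are viscosity solutions continuous up to the boundary. (Outside $\Omega$, $g$ denotes a continuous extension of the boundary datum used as game payoff; the hypothesis is that this extension equals $\pi$ on the given half-space.) Condition $(F_k)$: for every $y\in\partial\Omega$ there is $r>0$ such that for every $\delta>0$ there exist a $k$-dimensional subspace $T$, a unit vector $w'$, $\lambda>0$, $\theta'>0$ with $\{x\in\Omega\cap B_r(y):\operatorname{dist}(x-y,T)<\lambda,\ \langle w',x-y\rangle<\theta'\}\subset B_\delta(y)$. *)

theory Defs
  imports "HOL-Analysis.Analysis"
begin

text \<open>j-th smallest eigenvalue via the Courant--Fischer min-max formula.\<close>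
definition eig :: "nat \<Rightarrow> real^'n^'n \<Rightarrow> real" where
  "eig j A = Inf {Sup {(A *v v) \<bullet> v | v. v \<in> S \<and> norm v = 1} | S.
                     subspace S \<and> dim S = j}"

definition cond_F :: "nat \<Rightarrow> (real^'n) set \<Rightarrow> bool" where
  "cond_F k \<Omega> \<longleftrightarrow> (\<forall>y\<in>frontier \<Omega>. \<exists>r>0. \<forall>\<delta>>0.
      \<exists>T w' lam th'. subspace T \<and> dim T = k \<and> norm w' = 1 \<and> lam > 0 \<and> th' > 0 \<and>
        {x \<in> \<Omega> \<inter> ball y r. infdist (x - y) T < lam \<and> w' \<bullet> (x - y) < th'} \<subseteq> ball y \<delta>)"

definition test_fun ::
  "(real^'n \<Rightarrow> real \<Rightarrow> real) \<Rightarrow> (real^'n \<Rightarrow> real \<Rightarrow> real) \<Rightarrow> (real^'n \<Rightarrow> real \<Rightarrow> real^'n)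
     \<Rightarrow> (real^'n \<Rightarrow> real \<Rightarrow> real^'n^'n) \<Rightarrow> ((real^'n) \<times> real) set \<Rightarrow> bool" where
  "test_fun phi phit Dphi D2phi U \<longleftrightarrow> open U \<and>
     continuous_on U (\<lambda>(y,s). phi y s) \<and>
     continuous_on U (\<lambda>(y,s). phit y s) \<and>
     continuous_on U (\<lambda>(y,s). Dphi y s) \<and>
     continuous_on U (\<lambda>(y,s). D2phi y s) \<and>
     (\<forall>(y,s)\<in>U. ((\<lambda>r. phi y r) has_real_derivative phit y s) (at s) \<and>
        ((\<lambda>z. phi z s) has_derivative (\<lambda>h. Dphi y s \<bullet> h)) (at y) \<and>
        ((\<lambda>z. Dphi z s) has_derivative (\<lambda>h. D2phi y s *v h)) (at y))"

definition visc_sub :: "nat \<Rightarrow> (real^'n) set \<Rightarrow> (real^'n \<Rightarrow> real \<Rightarrow> real) \<Rightarrow> bool" where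
  "visc_sub j \<Omega> u \<longleftrightarrow> (\<forall>x t phi phit Dphi D2phi U.
      x \<in> \<Omega> \<and> t > 0 \<and> (x,t) \<in> U \<and> U \<subseteq> \<Omega> \<times> {0<..} \<and> test_fun phi phit Dphi D2phi U \<and>
      (\<forall>(y,s)\<in>U. u y s - phi y s \<le> u x t - phi x t)
      \<longrightarrow> phit x t - eig j (D2phi x t) \<le> 0)"

definition visc_super :: "nat \<Rightarrow> (real^'n) set \<Rightarrow> (real^'n \<Rightarrow> real \<Rightarrow> real) \<Rightarrow> bool" where
  "visc_super j \<Omega> u \<longleftrightarrow> (\<forall>x t phi phit Dphi D2phi U.
      x \<in> \<Omega> \<and> t > 0 \<and> (x,t) \<in> U \<and> U \<subseteq> \<Omega> \<times> {0<..} \<and> test_fun phi phit Dphi D2phi U \<and>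
      (\<forall>(y,s)\<in>U. u y s - phi y s \<ge> u x t - phi x t)
      \<longrightarrow> phit x t - eig j (D2phi x t) \<ge> 0)"

definition visc_solution ::
  "nat \<Rightarrow> (real^'n) set \<Rightarrow> (real^'n \<Rightarrow> real) \<Rightarrow> (real^'n \<Rightarrow> real) \<Rightarrow> (real^'n \<Rightarrow> real \<Rightarrow> real) \<Rightarrow> bool" where
  "visc_solution j \<Omega> g u0 u \<longleftrightarrow>
     continuous_on (closure \<Omega> \<times> {0..}) (\<lambda>(x,t). u x t) \<and>
     visc_sub j \<Omega> u \<and> visc_super j \<Omega> u \<and>
     (\<forall>x\<in>frontier \<Omega>. \<forall>t>0. u x t = g x) \<and>
     (\<forall>x\<in>closure \<Omega>. u x 0 = u0 x)"

end

theory Submission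
  imports Defs
begin


lemma quad_bound: "\<exists>C. \<forall>v::real^'n. norm v = 1 \<longrightarrow> \<bar>(A *v v) \<bullet> v\<bar> \<le> C"
proof -
  have "compact ((\<lambda>v::real^'n. (A *v v) \<bullet> v) ` sphere 0 1)"
  proof (rule compact_continuous_image)
    show "continuous_on (sphere 0 1) (\<lambda>v::real^'n. (A *v v) \<bullet> v)"
      by (intro continuous_intros)
  qed simp
  then have "bounded ((\<lambda>v::real^'n. (A *v v) \<bullet> v) ` sphere 0 1)" by (rule compact_imp_bounded)
  then obtain C where C: "\<forall>x\<in>(\<lambda>v::real^'n. (A *v v) \<bullet> v) ` sphere 0 1. norm x \<le> C"
    unfolding bounded_iff by blast
  have "\<forall>v::real^'n. norm v = 1 \<longrightarrow> \<bar>(A *v v) \<bullet> v\<bar> \<le> C"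
  proof (intro allI impI)
    fix v :: "real^'n" assume "norm v = 1"
    then have "v \<in> sphere 0 1" by simp
    then show "\<bar>(A *v v) \<bullet> v\<bar> \<le> C" using C by fastforce
  qed
  then show ?thesis by blast
qed

lemma subspace_has_unit:
  fixes S :: "(real^'n) set"
  assumes "subspace S" "dim S \<ge> 1"
  obtains v where "v \<in> S" "norm v = 1"
proof -
  have "\<not> S \<subseteq> {0}"
  proof
    assume "S \<subseteq> {0}" then have "dim S = 0" using dim_eq_0 by blast
    with assms(2) show False by simp
  qed
  then obtain x where x: "x \<in> S" "x \<noteq> 0" by auto
  have "(1/norm x) *\<^sub>R x \<in> S" using assms(1) x(1) by (simp add: subspace_scale)
  moreover have "norm ((1/norm x) *\<^sub>R x) = 1" using x(2) by simp
  ultimately show ?thesis using that by blast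
qed

lemma eig_upper:
  fixes A :: "real^'n^'n"
  assumes "1 \<le> j" "subspace S" "dim S = j"
    and "\<And>v. v \<in> S \<Longrightarrow> norm v = 1 \<Longrightarrow> (A *v v) \<bullet> v \<le> \<alpha>"
  shows "eig j A \<le> \<alpha>"
proof -
  obtain C where C: "\<And>v::real^'n. norm v = 1 \<Longrightarrow> \<bar>(A *v v) \<bullet> v\<bar> \<le> C"
    using quad_bound[of A] by blast
  let ?R = "\<lambda>S. {(A *v v) \<bullet> v | v. v \<in> S \<and> norm v = 1}"
  have bdd: "bdd_below {Sup (?R S) | S. subspace S \<and> dim S = j}"
  proof (rule bdd_belowI[where m="-C"])
    fix x assume "x \<in> {Sup (?R S) | S. subspace S \<and> dim S = j}"
    then obtain T where T: "subspace T" "dim T = j" "x = Sup (?R T)" by blast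
    have "dim T \<ge> 1" using T(2) assms(1) by simp
    then obtain v where v: "v \<in> T" "norm v = 1" using subspace_has_unit[OF T(1)] by blast
    have "bdd_above (?R T)"
    proof (rule bdd_aboveI)
      fix z assume "z \<in> ?R T"
      then obtain u where "z = (A *v u) \<bullet> u" "norm u = 1" by blast
      then show "z \<le> C" using C[of u] by linarith
    qed
    hence "(A *v v) \<bullet> v \<le> x" unfolding T(3) using v by (intro cSup_upper) blast+
    moreover have "-C \<le> (A *v v) \<bullet> v" using C[OF v(2)] by linarith
    ultimately show "-C \<le> x" by linarith
  qed
  have "eig j A \<le> Sup (?R S)" unfolding eig_def
    using assms(2,3) by (intro cInf_lower[OF _ bdd]) blast
  also have "\<dots> \<le> \<alpha>"
  proof (rule cSup_least)
    have "dim S \<ge> 1" using assms(1,3) by simp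
    then obtain v where v: "v \<in> S" "norm v = 1" using subspace_has_unit[OF assms(2)] by blast
    then show "?R S \<noteq> {}" by blast
    show "\<And>x. x \<in> ?R S \<Longrightarrow> x \<le> \<alpha>" using assms(4) by blast
  qed
  finally show ?thesis .
qed

lemma eig_lower:
  fixes A :: "real^'n^'n"
  assumes "j \<le> CARD('n)" "subspace V" "dim V + j > CARD('n)"
    and "\<And>v. v \<in> V \<Longrightarrow> norm v = 1 \<Longrightarrow> (A *v v) \<bullet> v \<ge> \<beta>"
  shows "eig j A \<ge> \<beta>"
proof -
  obtain C where C: "\<And>v::real^'n. norm v = 1 \<Longrightarrow> \<bar>(A *v v) \<bullet> v\<bar> \<le> C"
    using quad_bound[of A] by blast
  let ?R = "\<lambda>S. {(A *v v) \<bullet> v | v. v \<in> S \<and> norm v = 1}"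
  have "j \<le> dim (UNIV :: (real^'n) set)" using assms(1) by simp
  then obtain S0 :: "(real^'n) set" where "subspace S0" "dim S0 = j"
    using choose_subspace_of_subspace[of j UNIV] by blast
  hence ne: "{Sup (?R S) | S. subspace S \<and> dim S = j} \<noteq> {}" by blast
  show ?thesis unfolding eig_def
  proof (rule cInf_greatest[OF ne])
    fix x assume "x \<in> {Sup (?R S) | S. subspace S \<and> dim S = j}"
    then obtain T where T: "subspace T" "dim T = j" "x = Sup (?R T)" by blast
    have "dim {x + y |x y. x \<in> T \<and> y \<in> V} \<le> CARD('n)"
      using dim_subset_UNIV[of "{x + y |x y. x \<in> T \<and> y \<in> V}"] by simp
    hence d1: "dim (T \<inter> V) \<ge> 1" using dim_sums_Int[OF T(1) assms(2)] T(2) assms(3) by linarith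
    have sI: "subspace (T \<inter> V)" using T(1) assms(2) by (rule subspace_inter)
    obtain v where v: "v \<in> T \<inter> V" "norm v = 1"
      using subspace_has_unit[OF sI d1] by blast
    have "bdd_above (?R T)"
    proof (rule bdd_aboveI)
      fix z assume "z \<in> ?R T"
      then obtain u where "z = (A *v u) \<bullet> u" "norm u = 1" by blast
      then show "z \<le> C" using C[of u] by linarith
    qed
    hence "(A *v v) \<bullet> v \<le> x" unfolding T(3) using v by (intro cSup_upper) blast+
    moreover have "\<beta> \<le> (A *v v) \<bullet> v" using assms(4) v by auto
    ultimately show "\<beta> \<le> x" by linarith
  qed
qed



lemma test_fun_subset:
  assumes "test_fun \<phi> \<phi>t D\<phi> D2\<phi> U" "open V" "V \<subseteq> U"
  shows "test_fun \<phi> \<phi>t D\<phi> D2\<phi> V"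
  using assms unfolding test_fun_def by (auto intro: continuous_on_subset)

lemma test_fun_add_time:
  assumes "test_fun \<phi> \<phi>t D\<phi> D2\<phi> U"
    and "\<And>y s. (y,s) \<in> U \<Longrightarrow> (f has_real_derivative f' s) (at s)"
    and "continuous_on U (\<lambda>(y,s). f s)" "continuous_on U (\<lambda>(y,s). f' s)"
  shows "test_fun (\<lambda>y s. \<phi> y s + f s) (\<lambda>y s. \<phi>t y s + f' s) D\<phi> D2\<phi> U"
proof -
  have e1: "(\<lambda>(y,s). \<phi> y s + f s) = (\<lambda>p. (\<lambda>(y,s). \<phi> y s) p + (\<lambda>(y,s). f s) p)" by auto
  have e2: "(\<lambda>(y,s). \<phi>t y s + f' s) = (\<lambda>p. (\<lambda>(y,s). \<phi>t y s) p + (\<lambda>(y,s). f' s) p)" by auto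
  show ?thesis using assms unfolding test_fun_def e1 e2
    by (auto intro!: continuous_on_add DERIV_add has_derivative_add_const)
qed

lemma deriv_blow:
  assumes "r < T2"
  shows "((\<lambda>r. c / (T2 - r)) has_real_derivative c / (T2 - r)^2) (at r)"
  using assms by (auto intro!: derivative_eq_intros simp: power2_eq_square field_simps)

lemma comp_sub:
  fixes D :: "(real^'n) set" and u \<Psi> \<Psi>t :: "real^'n \<Rightarrow> real \<Rightarrow> real"
  assumes D: "open D" "bounded D"
    and sub: "visc_sub j D u"
    and uc: "continuous_on (closure D \<times> {0..}) (\<lambda>(x,t). u x t)"
    and tf: "test_fun \<Psi> \<Psi>t D\<Psi> D2\<Psi> (D \<times> {0<..<T2})"
    and \<Psi>c: "continuous_on (closure D \<times> {0..T2}) (\<lambda>(x,t). \<Psi> x t)"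
    and strict: "\<And>x t. x \<in> D \<Longrightarrow> 0 < t \<Longrightarrow> t < T2 \<Longrightarrow> \<Psi>t x t - eig j (D2\<Psi> x t) > 0"
    and bd: "\<And>x t. x \<in> frontier D \<Longrightarrow> 0 < t \<Longrightarrow> t < T2 \<Longrightarrow> u x t \<le> \<Psi> x t"
    and init: "\<And>x. x \<in> closure D \<Longrightarrow> u x 0 \<le> \<Psi> x 0"
    and x0: "x0 \<in> closure D" "0 \<le> t0" "t0 < T2"
  shows "u x0 t0 \<le> \<Psi> x0 t0"
proof (rule ccontr)
  assume neg: "\<not> ?thesis"
  define d where "d = u x0 t0 - \<Psi> x0 t0"
  have d: "d > 0" using neg unfolding d_def by simp
  define K0 where "K0 = closure D \<times> {0..T2}"
  have cK0: "compact K0" unfolding K0_def using D(2)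
    by (intro compact_Times) (auto simp: compact_closure)
  have pK0: "(x0,t0) \<in> K0" unfolding K0_def using x0 by auto
  have fc0: "continuous_on K0 (\<lambda>(x,t). u x t - \<Psi> x t)"
  proof -
    have "continuous_on K0 (\<lambda>(x,t). u x t)"
      using uc by (rule continuous_on_subset) (auto simp: K0_def)
    moreover have "continuous_on K0 (\<lambda>(x,t). \<Psi> x t)" using \<Psi>c unfolding K0_def .
    ultimately have "continuous_on K0 (\<lambda>p. (\<lambda>(x,t). u x t) p - (\<lambda>(x,t). \<Psi> x t) p)"
      by (rule continuous_on_diff)
    then show ?thesis by (simp add: case_prod_beta')
  qed
  obtain p where p: "p \<in> K0" "\<And>q. q \<in> K0 \<Longrightarrow> (\<lambda>(x,t). u x t - \<Psi> x t) q \<le> (\<lambda>(x,t). u x t - \<Psi> x t) p"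
    using continuous_attains_sup[OF cK0 _ fc0] pK0 by blast
  define B where "B = (\<lambda>(x,t). u x t - \<Psi> x t) p"
  have Bd: "d \<le> B" using p(2)[OF pK0] unfolding B_def d_def by simp
  have Bbd: "\<And>x t. x \<in> closure D \<Longrightarrow> 0 \<le> t \<Longrightarrow> t \<le> T2 \<Longrightarrow> u x t - \<Psi> x t \<le> B"
    using p(2) unfolding B_def K0_def by fastforce
  define c where "c = d * (T2 - t0) / 4"
  have c: "c > 0" using d x0 unfolding c_def by simp
  have cd: "c / (T2 - t0) = d / 4"
  proof -
    have "T2 - t0 \<noteq> 0" using x0 by simp
    then show ?thesis unfolding c_def by (simp add: field_simps)
  qed
  define \<eta> where "\<eta> = min ((T2 - t0)/2) (c / (2*B))"
  have B0: "B > 0" using Bd d by simp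
  have \<eta>1: "\<eta> > 0" using x0 c B0 unfolding \<eta>_def by simp
  have \<eta>2: "\<eta> \<le> (T2 - t0)/2" unfolding \<eta>_def by (rule min.cobounded1)
  have \<eta>3: "\<eta> \<le> c / (2*B)" unfolding \<eta>_def by (rule min.cobounded2)
  note \<eta> = \<eta>1 \<eta>2 \<eta>3
  have ceta: "c / \<eta> \<ge> 2 * B"
  proof -
    have "\<eta> * (2*B) \<le> c" using \<eta>(3) B0 by (simp add: field_simps)
    then show ?thesis using \<eta>(1) by (simp add: field_simps)
  qed
  define T1 where "T1 = T2 - \<eta>"
  have T1: "t0 < T1" "T1 < T2" using \<eta> x0 unfolding T1_def by auto
  define \<Phi> where "\<Phi> = (\<lambda>x t. \<Psi> x t + c / (T2 - t))"
  define K where "K = closure D \<times> {0..T1}"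
  have cK: "compact K" unfolding K_def using D(2)
    by (intro compact_Times) (auto simp: compact_closure)
  have pK: "(x0,t0) \<in> K" unfolding K_def using x0 T1 by auto
  have fc: "continuous_on K (\<lambda>(x,t). u x t - \<Phi> x t)"
  proof -
    have "continuous_on K (\<lambda>(x,t). u x t - \<Psi> x t)"
      using fc0 by (rule continuous_on_subset) (use T1 in \<open>auto simp: K_def K0_def\<close>)
    moreover have "continuous_on K (\<lambda>p. c / (T2 - snd p))"
      using T1 by (intro continuous_intros) (auto simp: K_def)
    ultimately have "continuous_on K (\<lambda>p. (\<lambda>(x,t). u x t - \<Psi> x t) p - c / (T2 - snd p))"
      by (rule continuous_on_diff)
    then show ?thesis by (simp add: case_prod_beta' \<Phi>_def algebra_simps)
  qed
  obtain q where q: "q \<in> K" "\<And>r. r \<in> K \<Longrightarrow> (\<lambda>(x,t). u x t - \<Phi> x t) r \<le> (\<lambda>(x,t). u x t - \<Phi> x t) q"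
    using continuous_attains_sup[OF cK _ fc] pK by blast
  obtain x1 t1 where q1: "q = (x1, t1)" by (cases q)
  have x1: "x1 \<in> closure D" "0 \<le> t1" "t1 \<le> T1" using q(1) unfolding q1 K_def by auto
  define m where "m = u x1 t1 - \<Phi> x1 t1"
  have mge: "m \<ge> d - d/4"
  proof -
    have "u x0 t0 - \<Phi> x0 t0 \<le> m" using q(2)[OF pK] unfolding q1 m_def by simp
    moreover have "u x0 t0 - \<Phi> x0 t0 = (u x0 t0 - \<Psi> x0 t0) - c / (T2 - t0)"
      unfolding \<Phi>_def by simp
    moreover have "(u x0 t0 - \<Psi> x0 t0) - c / (T2 - t0) = d - d/4"
      by (simp only: cd d_def)
    ultimately show ?thesis by linarith
  qed
  have mpos: "m > 0" using mge d by simp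
  have ub: "u x1 t1 - \<Psi> x1 t1 \<le> B" using Bbd[OF x1(1,2)] x1(3) T1 by simp
  have t1pos: "t1 > 0"
  proof (rule ccontr)
    assume "\<not> t1 > 0" then have "t1 = 0" using x1 by simp
    then have "m = (u x1 0 - \<Psi> x1 0) - c / T2" unfolding m_def \<Phi>_def by simp
    moreover have "u x1 0 - \<Psi> x1 0 \<le> 0" using init[OF x1(1)] by simp
    moreover have "c / T2 > 0" using c T1 x0 by simp
    ultimately show False using mpos by linarith
  qed
  have t1lt: "t1 < T1"
  proof (rule ccontr)
    assume "\<not> t1 < T1" then have "t1 = T1" using x1 by simp
    then have "m = (u x1 t1 - \<Psi> x1 t1) - c / \<eta>" unfolding m_def \<Phi>_def T1_def by simp
    then show False using ub ceta mpos B0 by linarith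
  qed
  have x1D: "x1 \<in> D"
  proof (rule ccontr)
    assume "x1 \<notin> D"
    then have "x1 \<in> frontier D" using x1(1) D(1) by (simp add: frontier_def interior_open)
    then have "u x1 t1 \<le> \<Psi> x1 t1" using bd t1pos t1lt T1 by simp
    moreover have "c / (T2 - t1) > 0" using c t1lt T1 by simp
    ultimately show False using mpos unfolding m_def \<Phi>_def by linarith
  qed
  define U where "U = D \<times> {0<..<T1}"
  have oU: "open U" unfolding U_def using D(1) by (intro open_Times) auto
  have tfU: "test_fun \<Psi> \<Psi>t D\<Psi> D2\<Psi> U"
    using tf oU by (rule test_fun_subset) (use T1 in \<open>auto simp: U_def\<close>)
  have tfPhi: "test_fun \<Phi> (\<lambda>x t. \<Psi>t x t + c / (T2 - t)^2) D\<Psi> D2\<Psi> U"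
    unfolding \<Phi>_def
  proof (rule test_fun_add_time[OF tfU])
    show "((\<lambda>r. c / (T2 - r)) has_real_derivative c / (T2 - s)^2) (at s)" if "(y,s) \<in> U" for y s
      using that T1 by (intro deriv_blow) (auto simp: U_def)
    show "continuous_on U (\<lambda>(y, s). c / (T2 - s))"
      using T1 by (auto simp: U_def case_prod_beta' intro!: continuous_intros)
    show "continuous_on U (\<lambda>(y, s). c / (T2 - s)^2)"
      using T1 by (auto simp: U_def case_prod_beta' intro!: continuous_intros)
  qed
  have inU: "(x1,t1) \<in> U" unfolding U_def using x1D t1pos t1lt by simp
  have sU: "U \<subseteq> D \<times> {0<..}" unfolding U_def by auto
  have maxU: "\<forall>(y,s)\<in>U. u y s - \<Phi> y s \<le> u x1 t1 - \<Phi> x1 t1"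
  proof (clarify)
    fix y s assume "(y,s) \<in> U"
    then have "(y,s) \<in> K" unfolding U_def K_def by (auto intro: closure_subset[THEN subsetD])
    from q(2)[OF this] show "u y s - \<Phi> y s \<le> u x1 t1 - \<Phi> x1 t1" unfolding q1 by simp
  qed
  have "(\<lambda>x t. \<Psi>t x t + c / (T2 - t)^2) x1 t1 - eig j (D2\<Psi> x1 t1) \<le> 0"
    using sub[unfolded visc_sub_def, rule_format, of x1 t1 U \<Phi> _ D\<Psi> D2\<Psi>]
      x1D t1pos inU sU tfPhi maxU by blast
  moreover have "\<Psi>t x1 t1 - eig j (D2\<Psi> x1 t1) > 0" using strict x1D t1pos t1lt T1 by simp
  moreover have "c / (T2 - t1)^2 > 0" using c t1lt T1 by simp
  ultimately show False by simp
qed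

lemma comp_super:
  fixes D :: "(real^'n) set" and u \<Psi> \<Psi>t :: "real^'n \<Rightarrow> real \<Rightarrow> real"
  assumes D: "open D" "bounded D"
    and sub: "visc_super j D u"
    and uc: "continuous_on (closure D \<times> {0..}) (\<lambda>(x,t). u x t)"
    and tf: "test_fun \<Psi> \<Psi>t D\<Psi> D2\<Psi> (D \<times> {0<..<T2})"
    and \<Psi>c: "continuous_on (closure D \<times> {0..T2}) (\<lambda>(x,t). \<Psi> x t)"
    and strict: "\<And>x t. x \<in> D \<Longrightarrow> 0 < t \<Longrightarrow> t < T2 \<Longrightarrow> \<Psi>t x t - eig j (D2\<Psi> x t) < 0"
    and bd: "\<And>x t. x \<in> frontier D \<Longrightarrow> 0 < t \<Longrightarrow> t < T2 \<Longrightarrow> \<Psi> x t \<le> u x t"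
    and init: "\<And>x. x \<in> closure D \<Longrightarrow> \<Psi> x 0 \<le> u x 0"
    and x0: "x0 \<in> closure D" "0 \<le> t0" "t0 < T2"
  shows "\<Psi> x0 t0 \<le> u x0 t0"
proof (rule ccontr)
  assume neg: "\<not> ?thesis"
  define d where "d = \<Psi> x0 t0 - u x0 t0"
  have d: "d > 0" using neg unfolding d_def by simp
  define K0 where "K0 = closure D \<times> {0..T2}"
  have cK0: "compact K0" unfolding K0_def using D(2)
    by (intro compact_Times) (auto simp: compact_closure)
  have pK0: "(x0,t0) \<in> K0" unfolding K0_def using x0 by auto
  have fc0: "continuous_on K0 (\<lambda>(x,t). \<Psi> x t - u x t)"
  proof -
    have "continuous_on K0 (\<lambda>(x,t). u x t)"
      using uc by (rule continuous_on_subset) (auto simp: K0_def)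
    moreover have "continuous_on K0 (\<lambda>(x,t). \<Psi> x t)" using \<Psi>c unfolding K0_def .
    ultimately have "continuous_on K0 (\<lambda>p. (\<lambda>(x,t). \<Psi> x t) p - (\<lambda>(x,t). u x t) p)"
      by (rule continuous_on_diff[rotated])
    then show ?thesis by (simp add: case_prod_beta')
  qed
  obtain p where p: "p \<in> K0" "\<And>q. q \<in> K0 \<Longrightarrow> (\<lambda>(x,t). \<Psi> x t - u x t) q \<le> (\<lambda>(x,t). \<Psi> x t - u x t) p"
    using continuous_attains_sup[OF cK0 _ fc0] pK0 by blast
  define B where "B = (\<lambda>(x,t). \<Psi> x t - u x t) p"
  have Bd: "d \<le> B" using p(2)[OF pK0] unfolding B_def d_def by simp
  have Bbd: "\<And>x t. x \<in> closure D \<Longrightarrow> 0 \<le> t \<Longrightarrow> t \<le> T2 \<Longrightarrow> \<Psi> x t - u x t \<le> B"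
    using p(2) unfolding B_def K0_def by fastforce
  define c where "c = d * (T2 - t0) / 4"
  have c: "c > 0" using d x0 unfolding c_def by simp
  have cd: "c / (T2 - t0) = d / 4"
  proof -
    have "T2 - t0 \<noteq> 0" using x0 by simp
    then show ?thesis unfolding c_def by (simp add: field_simps)
  qed
  define \<eta> where "\<eta> = min ((T2 - t0)/2) (c / (2*B))"
  have B0: "B > 0" using Bd d by simp
  have \<eta>1: "\<eta> > 0" using x0 c B0 unfolding \<eta>_def by simp
  have \<eta>2: "\<eta> \<le> (T2 - t0)/2" unfolding \<eta>_def by (rule min.cobounded1)
  have \<eta>3: "\<eta> \<le> c / (2*B)" unfolding \<eta>_def by (rule min.cobounded2)
  note \<eta> = \<eta>1 \<eta>2 \<eta>3
  have ceta: "c / \<eta> \<ge> 2 * B"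
  proof -
    have "\<eta> * (2*B) \<le> c" using \<eta>(3) B0 by (simp add: field_simps)
    then show ?thesis using \<eta>(1) by (simp add: field_simps)
  qed
  define T1 where "T1 = T2 - \<eta>"
  have T1: "t0 < T1" "T1 < T2" using \<eta> x0 unfolding T1_def by auto
  define \<Phi> where "\<Phi> = (\<lambda>x t. \<Psi> x t + (-c) / (T2 - t))"
  define K where "K = closure D \<times> {0..T1}"
  have cK: "compact K" unfolding K_def using D(2)
    by (intro compact_Times) (auto simp: compact_closure)
  have pK: "(x0,t0) \<in> K" unfolding K_def using x0 T1 by auto
  have fc: "continuous_on K (\<lambda>(x,t). \<Phi> x t - u x t)"
  proof -
    have "continuous_on K (\<lambda>(x,t). \<Psi> x t - u x t)"
      using fc0 by (rule continuous_on_subset) (use T1 in \<open>auto simp: K_def K0_def\<close>)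
    moreover have "continuous_on K (\<lambda>p. c / (T2 - snd p))"
      using T1 by (intro continuous_intros) (auto simp: K_def)
    ultimately have "continuous_on K (\<lambda>p. (\<lambda>(x,t). \<Psi> x t - u x t) p - c / (T2 - snd p))"
      by (rule continuous_on_diff)
    then show ?thesis by (simp add: case_prod_beta' \<Phi>_def algebra_simps)
  qed
  obtain q where q: "q \<in> K" "\<And>r. r \<in> K \<Longrightarrow> (\<lambda>(x,t). \<Phi> x t - u x t) r \<le> (\<lambda>(x,t). \<Phi> x t - u x t) q"
    using continuous_attains_sup[OF cK _ fc] pK by blast
  obtain x1 t1 where q1: "q = (x1, t1)" by (cases q)
  have x1: "x1 \<in> closure D" "0 \<le> t1" "t1 \<le> T1" using q(1) unfolding q1 K_def by auto
  define m where "m = \<Phi> x1 t1 - u x1 t1"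
  have mge: "m \<ge> d - d/4"
  proof -
    have "\<Phi> x0 t0 - u x0 t0 \<le> m" using q(2)[OF pK] unfolding q1 m_def by simp
    moreover have "\<Phi> x0 t0 - u x0 t0 = (\<Psi> x0 t0 - u x0 t0) - c / (T2 - t0)"
      unfolding \<Phi>_def by simp
    moreover have "(\<Psi> x0 t0 - u x0 t0) - c / (T2 - t0) = d - d/4"
      by (simp only: cd d_def)
    ultimately show ?thesis by linarith
  qed
  have mpos: "m > 0" using mge d by simp
  have ub: "\<Psi> x1 t1 - u x1 t1 \<le> B" using Bbd[OF x1(1,2)] x1(3) T1 by simp
  have t1pos: "t1 > 0"
  proof (rule ccontr)
    assume "\<not> t1 > 0" then have "t1 = 0" using x1 by simp
    then have "m = (\<Psi> x1 0 - u x1 0) - c / T2" unfolding m_def \<Phi>_def by simp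
    moreover have "\<Psi> x1 0 - u x1 0 \<le> 0" using init[OF x1(1)] by simp
    moreover have "c / T2 > 0" using c T1 x0 by simp
    ultimately show False using mpos by linarith
  qed
  have t1lt: "t1 < T1"
  proof (rule ccontr)
    assume "\<not> t1 < T1" then have "t1 = T1" using x1 by simp
    then have "m = (\<Psi> x1 t1 - u x1 t1) - c / \<eta>" unfolding m_def \<Phi>_def T1_def by simp
    then show False using ub ceta mpos B0 by linarith
  qed
  have x1D: "x1 \<in> D"
  proof (rule ccontr)
    assume "x1 \<notin> D"
    then have "x1 \<in> frontier D" using x1(1) D(1) by (simp add: frontier_def interior_open)
    then have "\<Psi> x1 t1 \<le> u x1 t1" using bd t1pos t1lt T1 by simp
    moreover have "c / (T2 - t1) > 0" using c t1lt T1 by simp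
    ultimately show False using mpos unfolding m_def \<Phi>_def by linarith
  qed
  define U where "U = D \<times> {0<..<T1}"
  have oU: "open U" unfolding U_def using D(1) by (intro open_Times) auto
  have tfU: "test_fun \<Psi> \<Psi>t D\<Psi> D2\<Psi> U"
    using tf oU by (rule test_fun_subset) (use T1 in \<open>auto simp: U_def\<close>)
  have tfPhi: "test_fun \<Phi> (\<lambda>x t. \<Psi>t x t + (-c) / (T2 - t)^2) D\<Psi> D2\<Psi> U"
    unfolding \<Phi>_def
  proof (rule test_fun_add_time[OF tfU])
    show "((\<lambda>r. (-c) / (T2 - r)) has_real_derivative (-c) / (T2 - s)^2) (at s)" if "(y,s) \<in> U" for y s
      using that T1 by (intro deriv_blow) (auto simp: U_def)
    show "continuous_on U (\<lambda>(y, s). (-c) / (T2 - s))"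
      using T1 by (auto simp: U_def case_prod_beta' intro!: continuous_intros)
    show "continuous_on U (\<lambda>(y, s). (-c) / (T2 - s)^2)"
      using T1 by (auto simp: U_def case_prod_beta' intro!: continuous_intros)
  qed
  have inU: "(x1,t1) \<in> U" unfolding U_def using x1D t1pos t1lt by simp
  have sU: "U \<subseteq> D \<times> {0<..}" unfolding U_def by auto
  have maxU: "\<forall>(y,s)\<in>U. u y s - \<Phi> y s \<ge> u x1 t1 - \<Phi> x1 t1"
  proof (clarify)
    fix y s assume "(y,s) \<in> U"
    then have "(y,s) \<in> K" unfolding U_def K_def by (auto intro: closure_subset[THEN subsetD])
    from q(2)[OF this] show "u y s - \<Phi> y s \<ge> u x1 t1 - \<Phi> x1 t1" unfolding q1 by simp
  qed
  have "(\<lambda>x t. \<Psi>t x t + (-c) / (T2 - t)^2) x1 t1 - eig j (D2\<Psi> x1 t1) \<ge> 0"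
    using sub[unfolded visc_super_def, rule_format, of x1 t1 U \<Phi> _ D\<Psi> D2\<Psi>]
      x1D t1pos inU sU tfPhi maxU by blast
  moreover have "\<Psi>t x1 t1 - eig j (D2\<Psi> x1 t1) < 0" using strict x1D t1pos t1lt T1 by simp
  moreover have "c / (T2 - t1)^2 > 0" using c t1lt T1 by simp
  moreover have "(-c) / (T2 - t1)^2 = - (c / (T2 - t1)^2)" by simp
  ultimately show False by linarith
qed




definition pp :: "real \<Rightarrow> real" where "pp z = max 0 (1 - z)"

lemma pp_pow_deriv:
  assumes "n \<ge> 1"
  shows "((\<lambda>z. pp z ^ Suc n) has_real_derivative (- real (Suc n) * pp z ^ n)) (at z)"
proof -
  consider "z < 1" | "z > 1" | "z = 1" by linarith
  then show ?thesis
  proof cases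
    case 1
    have d0: "((\<lambda>z. 1 - z) has_real_derivative -1) (at z)" by (auto intro!: derivative_eq_intros)
    have d: "((\<lambda>z. (1 - z) ^ Suc n) has_real_derivative (- real (Suc n) * (1 - z) ^ n)) (at z)"
      using DERIV_power[OF d0, of "Suc n"] by (simp add: algebra_simps)
    have e: "pp z = 1 - z" using 1 by (simp add: pp_def)
    have "((\<lambda>z. pp z ^ Suc n) has_real_derivative (- real (Suc n) * (1 - z) ^ n)) (at z)"
      by (rule has_field_derivative_transform_within_open[OF d, of "{..<1}"]) (use 1 in \<open>auto simp: pp_def\<close>)
    then show ?thesis using e by simp
  next
    case 2
    have d: "((\<lambda>z. 0::real) has_real_derivative 0) (at z)" by simp
    have "pp z = 0" using 2 by (simp add: pp_def)
    then have e: "- real (Suc n) * pp z ^ n = 0" using assms by simp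
    have "((\<lambda>z. pp z ^ Suc n) has_real_derivative 0) (at z)"
      by (rule has_field_derivative_transform_within_open[OF d, of "{1<..}"]) (use 2 in \<open>auto simp: pp_def\<close>)
    then show ?thesis unfolding e .
  next
    case 3
    have L: "((\<lambda>h. (pp (z + h) ^ Suc n - pp z ^ Suc n) / h) \<longlongrightarrow> 0) (at 0)"
    proof (rule Lim_null_comparison)
      show "\<forall>\<^sub>F h in at 0. norm ((pp (z + h) ^ Suc n - pp z ^ Suc n) / h) \<le> \<bar>h\<bar> ^ n"
      proof (rule always_eventually, rule allI)
        fix h :: real
        have p0: "pp z = 0" using 3 by (simp add: pp_def)
        have ph: "0 \<le> pp (z + h)" "pp (z + h) \<le> \<bar>h\<bar>" using 3 by (auto simp: pp_def)
        have "norm ((pp (z + h) ^ Suc n - pp z ^ Suc n) / h) = pp (z+h) ^ Suc n / \<bar>h\<bar>"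
          using p0 ph by (simp add: abs_mult)
        also have "\<dots> \<le> \<bar>h\<bar> ^ n"
        proof (cases "h = 0")
          case False
          have "pp (z+h) ^ Suc n \<le> \<bar>h\<bar> ^ Suc n" using ph by (intro power_mono) auto
          then show ?thesis using False by (simp add: field_simps)
        qed simp
        finally show "norm ((pp (z + h) ^ Suc n - pp z ^ Suc n) / h) \<le> \<bar>h\<bar> ^ n" .
      qed
      have "((\<lambda>h::real. \<bar>h\<bar> ^ n) \<longlongrightarrow> \<bar>0\<bar> ^ n) (at 0)"
        by (intro tendsto_intros)
      moreover have z: "\<bar>0::real\<bar> ^ n = 0" using assms by simp
      ultimately show "((\<lambda>h::real. \<bar>h\<bar> ^ n) \<longlongrightarrow> 0) (at 0)" by (simp only: z)
    qed
    have e3: "- real (Suc n) * pp z ^ n = 0" using 3 assms by (simp add: pp_def)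
    show ?thesis unfolding DERIV_def e3 by (rule L)
  qed
qed

definition Gf :: "real \<Rightarrow> real \<Rightarrow> real" where "Gf M z = M * pp z ^ 3"
definition G1 :: "real \<Rightarrow> real \<Rightarrow> real" where "G1 M z = -3 * M * pp z ^ 2"
definition G2 :: "real \<Rightarrow> real \<Rightarrow> real" where "G2 M z = 6 * M * pp z"

lemma Gf_deriv: "(Gf M has_real_derivative G1 M z) (at z)"
proof -
  have "((\<lambda>z. M * pp z ^ Suc 2) has_real_derivative M * (- real (Suc 2) * pp z ^ 2)) (at z)"
    by (intro DERIV_cmult pp_pow_deriv) simp
  then show ?thesis unfolding Gf_def G1_def by (simp add: numeral_3_eq_3 algebra_simps)
qed

lemma G1_deriv: "(G1 M has_real_derivative G2 M z) (at z)"
proof -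
  have "((\<lambda>z. (-3 * M) * pp z ^ Suc 1) has_real_derivative (-3 * M) * (- real (Suc 1) * pp z ^ 1)) (at z)"
    by (intro DERIV_cmult pp_pow_deriv) simp
  then show ?thesis unfolding G1_def G2_def by (simp add: numeral_2_eq_2 algebra_simps)
qed

lemma pp_cont: "continuous_on S pp"
  unfolding pp_def by (intro continuous_intros)

lemma Gf_nonneg: "M \<ge> 0 \<Longrightarrow> Gf M z \<ge> 0" by (simp add: Gf_def pp_def)
lemma G1_nonpos: "M \<ge> 0 \<Longrightarrow> G1 M z \<le> 0" by (simp add: G1_def pp_def)
lemma Gf_ge: "M \<ge> 0 \<Longrightarrow> z \<le> 0 \<Longrightarrow> Gf M z \<ge> M"
proof -
  assume a: "M \<ge> 0" "z \<le> 0"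
  then have "pp z \<ge> 1" by (simp add: pp_def)
  then have "pp z ^ 3 \<ge> 1" by (simp add: one_le_power)
  then show ?thesis unfolding Gf_def using a by (metis mult_left_mono mult.right_neutral)
qed
lemma Gf_zero: "z \<ge> 1 \<Longrightarrow> Gf M z = 0" by (simp add: Gf_def pp_def)




definition outer :: "real^'n \<Rightarrow> real^'n \<Rightarrow> real^'n^'n" where
  "outer a b = (\<chi> i k. a$i * b$k)"
lemma outer_mult: "outer a b *v h = (b \<bullet> h) *\<^sub>R a"
  by (simp add: outer_def vec_eq_iff matrix_vector_mult_def inner_vec_def sum_distrib_left algebra_simps)
lemma outer_cont[continuous_intros]:
  "continuous_on S f \<Longrightarrow> continuous_on S g \<Longrightarrow> continuous_on S (\<lambda>x. outer (f x) (g x))"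
  unfolding outer_def by (intro continuous_intros)

definition Fb :: "real^'n \<Rightarrow> real \<Rightarrow> real^'n \<Rightarrow> real \<Rightarrow> real \<Rightarrow> real^'n \<Rightarrow> real" where
  "Fb w th y C Q x = C / (x \<bullet> w - th) - (x - y) \<bullet> (x - y) + Q"
definition gF :: "real^'n \<Rightarrow> real \<Rightarrow> real^'n \<Rightarrow> real \<Rightarrow> real^'n \<Rightarrow> real^'n" where
  "gF w th y C x = (- (C / (x \<bullet> w - th)^2)) *\<^sub>R w - 2 *\<^sub>R (x - y)"
definition HFv :: "real^'n \<Rightarrow> real \<Rightarrow> real \<Rightarrow> real^'n \<Rightarrow> real^'n \<Rightarrow> real^'n" where
  "HFv w th C x h = (2 * C / (x \<bullet> w - th)^3 * (w \<bullet> h)) *\<^sub>R w - 2 *\<^sub>R h"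
definition HF :: "real^'n \<Rightarrow> real \<Rightarrow> real \<Rightarrow> real^'n \<Rightarrow> real^'n^'n" where
  "HF w th C x = (2 * C / (x \<bullet> w - th)^3) *\<^sub>R outer w w - 2 *\<^sub>R mat 1"

lemma HF_mult: "HF w th C x *v h = HFv w th C x h"
  unfolding HF_def HFv_def
  by (simp add: algebra_simps outer_mult scaleR_matrix_vector_assoc[symmetric])

lemma lin_deriv: "((\<lambda>x. x \<bullet> w - th) has_derivative (\<lambda>h. w \<bullet> h)) (at x)"
  by (rule has_derivative_eq_rhs, (intro derivative_eq_intros)+, auto simp: inner_commute)

lemma recip_deriv:
  assumes "s \<noteq> 0"
  shows "((\<lambda>s. C / s) has_real_derivative (- (C / s^2))) (at s)"
  using assms by (auto intro!: derivative_eq_intros simp: power2_eq_square field_simps)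

lemma inv_lin_deriv:
  assumes "x \<bullet> w > th"
  shows "((\<lambda>x. C / (x \<bullet> w - th)) has_derivative (\<lambda>h. (- (C / (x \<bullet> w - th)^2)) * (w \<bullet> h))) (at x)"
proof -
  have "x \<bullet> w - th \<noteq> 0" using assms by simp
  from has_derivative_compose[OF lin_deriv recip_deriv[OF this, unfolded has_field_derivative_def]]
  show ?thesis by simp
qed

lemma sq_deriv: "((\<lambda>x. (x - y) \<bullet> (x - y)) has_derivative (\<lambda>h. (2 *\<^sub>R (x - y)) \<bullet> h)) (at x)"
  by (rule has_derivative_eq_rhs, (intro derivative_eq_intros)+, auto simp: inner_commute algebra_simps)

lemma Fb_deriv:
  assumes "x \<bullet> w > th"
  shows "(Fb w th y C Q has_derivative (\<lambda>h. gF w th y C x \<bullet> h)) (at x)"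
proof -
  have "((\<lambda>x. C / (x \<bullet> w - th) - (x - y) \<bullet> (x - y) + Q) has_derivative
     (\<lambda>h. (- (C / (x \<bullet> w - th)^2)) * (w \<bullet> h) - (2 *\<^sub>R (x - y)) \<bullet> h)) (at x)"
    by (intro has_derivative_add_const has_derivative_diff inv_lin_deriv[OF assms] sq_deriv)
  then show ?thesis unfolding Fb_def[abs_def] gF_def by (simp add: inner_diff_left)
qed

lemma gF_deriv:
  assumes "x \<bullet> w > th"
  shows "(gF w th y C has_derivative (\<lambda>h. HFv w th C x h)) (at x)"
proof -
  have d: "x \<bullet> w - th \<noteq> 0" using assms by simp
  have r2: "((\<lambda>s. - (C / s^2)) has_real_derivative (2 * C / s^3)) (at s)" if "s \<noteq> 0" for s
    using that by (auto intro!: derivative_eq_intros simp: power2_eq_square power3_eq_cube field_simps)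
  have a: "((\<lambda>x. - (C / (x \<bullet> w - th)^2)) has_derivative (\<lambda>h. (2 * C / (x \<bullet> w - th)^3) * (w \<bullet> h))) (at x)"
    using has_derivative_compose[OF lin_deriv r2[OF d, unfolded has_field_derivative_def]] by simp
  have "((\<lambda>x. (- (C / (x \<bullet> w - th)^2)) *\<^sub>R w - 2 *\<^sub>R (x - y)) has_derivative
      (\<lambda>h. ((2 * C / (x \<bullet> w - th)^3) * (w \<bullet> h)) *\<^sub>R w - 2 *\<^sub>R h)) (at x)"
  proof -
    have b: "((\<lambda>x. 2 *\<^sub>R (x - y)) has_derivative (\<lambda>h. 2 *\<^sub>R h)) (at x)"
      by (rule has_derivative_eq_rhs, (intro derivative_eq_intros)+, auto)
    show ?thesis by (rule has_derivative_diff[OF has_derivative_scaleR_left[OF a] b])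
  qed
  then show ?thesis unfolding gF_def[abs_def] HFv_def by simp
qed




lemma Gf_cont[continuous_intros]: "continuous_on S f \<Longrightarrow> continuous_on S (\<lambda>x. Gf M (f x))"
  unfolding Gf_def pp_def by (intro continuous_intros)
lemma G1_cont[continuous_intros]: "continuous_on S f \<Longrightarrow> continuous_on S (\<lambda>x. G1 M (f x))"
  unfolding G1_def pp_def by (intro continuous_intros)
lemma G2_cont[continuous_intros]: "continuous_on S f \<Longrightarrow> continuous_on S (\<lambda>x. G2 M (f x))"
  unfolding G2_def pp_def by (intro continuous_intros)

lemma cont_fst_comp:
  assumes "continuous_on S F" "U \<subseteq> S \<times> UNIV"
  shows "continuous_on U (\<lambda>p. F (fst p))"
  by (rule continuous_on_compose2[OF assms(1) continuous_on_fst]) (use assms(2) in auto)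

lemma barrier_test:
  fixes F :: "real^'n \<Rightarrow> real" and g :: "real^'n \<Rightarrow> real^'n" and H :: "real^'n \<Rightarrow> real^'n^'n"
  assumes U: "open U" "U \<subseteq> S \<times> UNIV"
    and Fd: "\<And>x. x \<in> S \<Longrightarrow> (F has_derivative (\<lambda>h. g x \<bullet> h)) (at x)"
    and gd: "\<And>x. x \<in> S \<Longrightarrow> (g has_derivative (\<lambda>h. H x *v h)) (at x)"
    and Fc: "continuous_on S F" and gc: "continuous_on S g" and Hc: "continuous_on S H"
  shows "test_fun (\<lambda>x t. a \<bullet> x + b + \<sigma> * (Gf M (t - F x) + \<epsilon> * t))
                 (\<lambda>x t. \<sigma> * (G1 M (t - F x) + \<epsilon>))
                 (\<lambda>x t. a + (\<sigma> * - G1 M (t - F x)) *\<^sub>R g x)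
                 (\<lambda>x t. \<sigma> *\<^sub>R (G2 M (t - F x) *\<^sub>R outer (g x) (g x) - G1 M (t - F x) *\<^sub>R H x)) U"
proof -
  have cF: "continuous_on U (\<lambda>p. F (fst p))" by (rule cont_fst_comp[OF Fc U(2)])
  have cg: "continuous_on U (\<lambda>p. g (fst p))" by (rule cont_fst_comp[OF gc U(2)])
  have cH: "continuous_on U (\<lambda>p. H (fst p))" by (rule cont_fst_comp[OF Hc U(2)])
  have c1: "continuous_on U (\<lambda>(x,t). a \<bullet> x + b + \<sigma> * (Gf M (t - F x) + \<epsilon> * t))"
    unfolding case_prod_beta' by (intro continuous_intros cF)
  have c2: "continuous_on U (\<lambda>(x,t). \<sigma> * (G1 M (t - F x) + \<epsilon>))"
    unfolding case_prod_beta' by (intro continuous_intros cF)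
  have c3: "continuous_on U (\<lambda>(x,t). a + (\<sigma> * - G1 M (t - F x)) *\<^sub>R g x)"
    unfolding case_prod_beta' by (intro continuous_intros cF cg)
  have c4: "continuous_on U (\<lambda>(x,t). \<sigma> *\<^sub>R (G2 M (t - F x) *\<^sub>R outer (g x) (g x) - G1 M (t - F x) *\<^sub>R H x))"
    unfolding case_prod_beta' by (intro continuous_intros cF cg cH)
  have D: "((\<lambda>r. a \<bullet> y + b + \<sigma> * (Gf M (r - F y) + \<epsilon> * r)) has_real_derivative \<sigma> * (G1 M (s - F y) + \<epsilon>)) (at s)"
    for y s
  proof -
    have "((\<lambda>r. Gf M (r - F y)) has_real_derivative G1 M (s - F y) * 1) (at s)"
      by (rule DERIV_chain2[OF Gf_deriv]) (auto intro!: derivative_eq_intros)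
    then show ?thesis by (auto intro!: derivative_eq_intros)
  qed
  have E: "((\<lambda>z. a \<bullet> z + b + \<sigma> * (Gf M (s - F z) + \<epsilon> * s)) has_derivative
       (\<lambda>h. (a + (\<sigma> * - G1 M (s - F y)) *\<^sub>R g y) \<bullet> h)) (at y)" if "y \<in> S" for y s
  proof -
    have i: "((\<lambda>z. s - F z) has_derivative (\<lambda>h. - (g y \<bullet> h))) (at y)"
      using Fd[OF that] by (rule has_derivative_eq_rhs[OF has_derivative_diff[OF has_derivative_const]]) simp
    have GG: "((\<lambda>z. Gf M (s - F z)) has_derivative (\<lambda>h. G1 M (s - F y) * (- (g y \<bullet> h)))) (at y)"
      using has_derivative_compose[OF i Gf_deriv[unfolded has_field_derivative_def]] by simp
    have "((\<lambda>z. a \<bullet> z + b + \<sigma> * (Gf M (s - F z) + \<epsilon> * s)) has_derivative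
       (\<lambda>h. a \<bullet> h + \<sigma> * (G1 M (s - F y) * (- (g y \<bullet> h))))) (at y)"
    proof -
      have L: "((\<lambda>z. a \<bullet> z) has_derivative (\<lambda>h. a \<bullet> h)) (at y)"
        by (rule has_derivative_eq_rhs, (intro derivative_eq_intros)+, auto simp: inner_commute)
      show ?thesis
        using has_derivative_add[OF has_derivative_add[OF L has_derivative_const[of b]]
                has_derivative_mult_right[OF has_derivative_add[OF GG has_derivative_const[of "\<epsilon> * s"]], of \<sigma>]]
        by simp
    qed
    then show ?thesis by (simp add: inner_add_left algebra_simps)
  qed
  have G: "((\<lambda>z. a + (\<sigma> * - G1 M (s - F z)) *\<^sub>R g z) has_derivative
       (\<lambda>h. (\<sigma> *\<^sub>R (G2 M (s - F y) *\<^sub>R outer (g y) (g y) - G1 M (s - F y) *\<^sub>R H y)) *v h)) (at y)"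
    if "y \<in> S" for y s
  proof -
    have i: "((\<lambda>z. s - F z) has_derivative (\<lambda>h. - (g y \<bullet> h))) (at y)"
      using Fd[OF that] by (rule has_derivative_eq_rhs[OF has_derivative_diff[OF has_derivative_const]]) simp
    have "((\<lambda>z. G1 M (s - F z)) has_derivative (\<lambda>h. G2 M (s - F y) * (- (g y \<bullet> h)))) (at y)"
      using has_derivative_compose[OF i G1_deriv[unfolded has_field_derivative_def]] by simp
    then have sc: "((\<lambda>z. \<sigma> * - G1 M (s - F z)) has_derivative (\<lambda>h. \<sigma> * - (G2 M (s - F y) * (- (g y \<bullet> h))))) (at y)"
      by (intro has_derivative_mult_right has_derivative_minus)
    have "((\<lambda>z. a + (\<sigma> * - G1 M (s - F z)) *\<^sub>R g z) has_derivative
       (\<lambda>h. 0 + ((\<sigma> * - G1 M (s - F y)) *\<^sub>R (H y *v h) + (\<sigma> * - (G2 M (s - F y) * (- (g y \<bullet> h)))) *\<^sub>R g y))) (at y)"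
      by (intro has_derivative_add has_derivative_const has_derivative_scaleR sc gd[OF that])
    then show ?thesis
      by (simp add: algebra_simps outer_mult scaleR_matrix_vector_assoc[symmetric])
  qed
  show ?thesis unfolding test_fun_def
    using U(1) c1 c2 c3 c4 D E G U(2) by (auto)
qed




lemma quad_HF:
  fixes x y w v :: "real^'n"
  assumes g0: "gF w th y C x \<bullet> v = 0" and v1: "norm v = 1" and C: "C > 0"
    and d0: "x \<bullet> w - th > 0" and dL: "x \<bullet> w - th \<le> Ld" and xy: "norm (x - y) \<le> L"
    and CL: "8 * L^2 * Ld \<le> C"
  shows "HFv w th C x v \<bullet> v \<le> -1"
proof -
  define d where "d = x \<bullet> w - th"
  define p where "p = w \<bullet> v"
  define q where "q = (x - y) \<bullet> v"
  have dpos: "d > 0" using d0 unfolding d_def .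
  have L0: "L \<ge> 0" using xy norm_ge_zero order_trans by blast
  have qL: "\<bar>q\<bar> \<le> L" unfolding q_def using Cauchy_Schwarz_ineq2[of "x - y" v] v1 xy by simp
  have q2: "q^2 \<le> L^2" using qL L0 by (metis abs_le_square_iff abs_of_nonneg)
  have eq: "- (C / d^2) * p - 2 * q = 0"
    using g0 unfolding gF_def d_def p_def q_def by (simp add: inner_diff_left)
  have cp: "C * p = - 2 * q * d^2"
  proof -
    have "d^2 > 0" using dpos by simp
    have "(C / d^2) * p = - 2 * q" using eq by simp
    then show ?thesis using \<open>d^2 > 0\<close> by (simp add: field_simps)
  qed
  have cp2: "(C * p)^2 \<le> 4 * L^2 * d^4"
  proof -
    have "(C * p)^2 = 4 * q^2 * d^4" unfolding cp by (simp add: eval_nat_numeral algebra_simps)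
    also have "\<dots> \<le> 4 * L^2 * d^4" using q2 by (intro mult_right_mono mult_left_mono) auto
    finally show ?thesis .
  qed
  have e1: "2 * C / d^3 * p^2 = 2 * (C * p)^2 / (C * d^3)"
    using C dpos by (simp add: field_simps power2_eq_square)
  have "2 * (C * p)^2 / (C * d^3) \<le> 2 * (4 * L^2 * d^4) / (C * d^3)"
    using cp2 C dpos by (intro divide_right_mono) auto
  also have "\<dots> = 8 * L^2 * d / C" using C dpos by (simp add: field_simps eval_nat_numeral)
  also have "\<dots> \<le> 8 * L^2 * Ld / C"
    using C dL L0 unfolding d_def by (intro divide_right_mono mult_left_mono) auto
  also have "\<dots> \<le> 1" using C CL by simp
  finally have key: "2 * C / d^3 * p^2 \<le> 1" using e1 by simp
  have "HFv w th C x v \<bullet> v = 2 * C / d^3 * p^2 - 2"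
  proof -
    have vv: "v \<bullet> v = 1" using v1 by (simp add: power2_norm_eq_inner[symmetric])
    show ?thesis unfolding HFv_def d_def[symmetric] p_def
      by (simp add: inner_diff_left vv power2_eq_square)
  qed
  then show ?thesis using key by simp
qed

lemma hyper_dim:
  fixes a :: "real^'n"
  shows "dim {v. a \<bullet> v = 0} \<ge> CARD('n) - 1"
proof (cases "a = 0")
  case True then show ?thesis by simp
next
  case False then show ?thesis using dim_hyperplane[OF False] by simp
qed

lemma D2_quad:
  fixes g v :: "real^'n"
  assumes "g \<bullet> v = 0"
  shows "((\<sigma> *\<^sub>R (A *\<^sub>R outer g g - B *\<^sub>R HF w th C x)) *v v) \<bullet> v = - \<sigma> * B * (HFv w th C x v \<bullet> v)"
  using assms
  by (simp add: algebra_simps outer_mult scaleR_matrix_vector_assoc[symmetric] HF_mult)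




lemma eps_le:
  fixes x z t :: real
  assumes "t \<ge> 0" "\<And>e. e > 0 \<Longrightarrow> x \<le> z + e * t"
  shows "x \<le> z"
proof (rule ccontr)
  assume "\<not> x \<le> z"
  define e where "e = (x - z) / (2 * (t + 1))"
  have e: "e > 0" using \<open>\<not> x \<le> z\<close> assms(1) unfolding e_def by simp
  have "e * t \<le> e * (t + 1)" using e by simp
  also have "\<dots> = (x - z) / 2" unfolding e_def using assms(1) by (simp add: field_simps)
  finally have "x \<le> z + (x - z) / 2" using assms(2)[OF e] by linarith
  then have "2 * x \<le> 2 * z + (x - z)" by (simp add: field_simps)
  then show False using \<open>\<not> x \<le> z\<close> by linarith
qed

lemma eig_zero_le: "1 \<le> j \<Longrightarrow> j \<le> CARD('n) \<Longrightarrow> eig j (0::real^'n^'n) \<le> 0"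
proof -
  assume j: "1 \<le> j" "j \<le> CARD('n)"
  have "j \<le> dim (UNIV :: (real^'n) set)" using j by simp
  then obtain S0 :: "(real^'n) set" where "subspace S0" "dim S0 = j"
    using choose_subspace_of_subspace[of j UNIV] by blast
  then show ?thesis using j by (intro eig_upper[of j S0]) auto
qed

lemma eig_zero_ge: "1 \<le> j \<Longrightarrow> j \<le> CARD('n) \<Longrightarrow> eig j (0::real^'n^'n) \<ge> 0"
  by (rule eig_lower[of j UNIV]) auto

lemma test_fun_const:
  "test_fun (\<lambda>x t. B + e * t) (\<lambda>x t. e) (\<lambda>x t. 0) (\<lambda>x t. 0) U \<longleftrightarrow> open U"
  unfolding test_fun_def
  by (auto intro!: continuous_intros derivative_eq_intros simp: case_prod_beta')

lemma apriori_up: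
  fixes \<Omega> :: "(real^'n) set" and u :: "real^'n \<Rightarrow> real \<Rightarrow> real"
  assumes "open \<Omega>" "bounded \<Omega>" "1 \<le> j" "j \<le> CARD('n)"
    and sol: "visc_solution j \<Omega> g u0 u"
    and B0: "\<And>x. x \<in> closure \<Omega> \<Longrightarrow> \<bar>u0 x\<bar> \<le> B" "\<And>x. x \<in> frontier \<Omega> \<Longrightarrow> \<bar>g x\<bar> \<le> B"
    and x: "x \<in> closure \<Omega>" "0 \<le> t"
  shows "u x t \<le> B"
proof -
  have uc: "continuous_on (closure \<Omega> \<times> {0..}) (\<lambda>(x,t). u x t)" and sub: "visc_sub j \<Omega> u"
    and bd: "\<forall>x\<in>frontier \<Omega>. \<forall>t>0. u x t = g x"
    and ini: "\<forall>x\<in>closure \<Omega>. u x 0 = u0 x"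
    using sol unfolding visc_solution_def by auto
  have oU: "open (\<Omega> \<times> {0<..<t+1})" using assms(1) by (intro open_Times) auto
  show ?thesis
  proof (rule eps_le[OF x(2)])
    fix e :: real assume e: "e > 0"
    have tf: "test_fun (\<lambda>x t. B + e * t) (\<lambda>x t. e) (\<lambda>x t. 0) (\<lambda>x t. 0) (\<Omega> \<times> {0<..<t + 1})"
      using oU test_fun_const by blast
    have cc: "continuous_on (closure \<Omega> \<times> {0..t + 1}) (\<lambda>(x, t). B + e * t)"
      by (auto simp: case_prod_beta' intro!: continuous_intros)
    have st: "\<And>x s. x \<in> \<Omega> \<Longrightarrow> 0 < s \<Longrightarrow> s < t + 1 \<Longrightarrow> 0 < e - eig j (0::real^'n^'n)"
      using eig_zero_le[OF assms(3,4)] e by simp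
    have bb: "\<And>x s. x \<in> frontier \<Omega> \<Longrightarrow> 0 < s \<Longrightarrow> s < t + 1 \<Longrightarrow> u x s \<le> B + e * s"
    proof -
      fix x s assume a: "x \<in> frontier \<Omega>" "0 < s" "s < t + 1"
      have "u x s = g x" using bd a by simp
      moreover have "g x \<le> B" using B0(2)[OF a(1)] by (simp add: abs_le_iff)
      moreover have "0 \<le> e * s" using e a by simp
      ultimately show "u x s \<le> B + e * s" by simp
    qed
    have ii: "\<And>x. x \<in> closure \<Omega> \<Longrightarrow> u x 0 \<le> B + e * 0"
      using ini B0(1) by (simp add: abs_le_iff)
    have "t < t + 1" by simp
    from comp_sub[OF assms(1,2) sub uc tf cc st bb ii x this]
    show "u x t \<le> B + e * t" .
  qed
qed

lemma apriori_lo: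
  fixes \<Omega> :: "(real^'n) set" and u :: "real^'n \<Rightarrow> real \<Rightarrow> real"
  assumes "open \<Omega>" "bounded \<Omega>" "1 \<le> j" "j \<le> CARD('n)"
    and sol: "visc_solution j \<Omega> g u0 u"
    and B0: "\<And>x. x \<in> closure \<Omega> \<Longrightarrow> \<bar>u0 x\<bar> \<le> B" "\<And>x. x \<in> frontier \<Omega> \<Longrightarrow> \<bar>g x\<bar> \<le> B"
    and x: "x \<in> closure \<Omega>" "0 \<le> t"
  shows "- B \<le> u x t"
proof -
  have uc: "continuous_on (closure \<Omega> \<times> {0..}) (\<lambda>(x,t). u x t)" and sup: "visc_super j \<Omega> u"
    and bd: "\<forall>x\<in>frontier \<Omega>. \<forall>t>0. u x t = g x"
    and ini: "\<forall>x\<in>closure \<Omega>. u x 0 = u0 x"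
    using sol unfolding visc_solution_def by auto
  have oU: "open (\<Omega> \<times> {0<..<t+1})" using assms(1) by (intro open_Times) auto
  have "- u x t \<le> B"
  proof (rule eps_le[OF x(2)])
    fix e :: real assume e: "e > 0"
    have tf: "test_fun (\<lambda>x t. - B + (-e) * t) (\<lambda>x t. -e) (\<lambda>x t. 0) (\<lambda>x t. 0) (\<Omega> \<times> {0<..<t + 1})"
      using oU test_fun_const by blast
    have cc: "continuous_on (closure \<Omega> \<times> {0..t + 1}) (\<lambda>(x, t). - B + (-e) * t)"
      by (auto simp: case_prod_beta' intro!: continuous_intros)
    have st: "\<And>x s. x \<in> \<Omega> \<Longrightarrow> 0 < s \<Longrightarrow> s < t + 1 \<Longrightarrow> -e - eig j (0::real^'n^'n) < 0"
      using eig_zero_ge[OF assms(3,4)] e by simp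
    have bb: "\<And>x s. x \<in> frontier \<Omega> \<Longrightarrow> 0 < s \<Longrightarrow> s < t + 1 \<Longrightarrow> - B + (-e) * s \<le> u x s"
    proof -
      fix x s assume a: "x \<in> frontier \<Omega>" "0 < s" "s < t + 1"
      have "u x s = g x" using bd a by simp
      moreover have "- B \<le> g x" using B0(2)[OF a(1)] by (simp add: abs_le_iff)
      moreover have "0 \<le> e * s" using e a by simp
      ultimately show "- B + (-e) * s \<le> u x s" by simp
    qed
    have ii: "\<And>x. x \<in> closure \<Omega> \<Longrightarrow> - B + (-e) * 0 \<le> u x 0"
    proof -
      fix x assume a: "x \<in> closure \<Omega>"
      have "u x 0 = u0 x" using ini a by simp
      moreover have "- B \<le> u0 x" using B0(1)[OF a] by (simp add: abs_le_iff)
      ultimately show "- B + (-e) * 0 \<le> u x 0" by simp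
    qed
    have "t < t + 1" by simp
    have "- B + (-e) * t \<le> u x t"
      by (rule comp_super[OF assms(1,2) sup uc tf cc]) (use st bb ii x in auto)
    then show "- u x t \<le> B + e * t" by simp
  qed
  then show ?thesis by simp
qed




lemma visc_sub_mono: "D \<subseteq> \<Omega> \<Longrightarrow> visc_sub j \<Omega> u \<Longrightarrow> visc_sub j D u"
  unfolding visc_sub_def by blast
lemma visc_super_mono: "D \<subseteq> \<Omega> \<Longrightarrow> visc_super j \<Omega> u \<Longrightarrow> visc_super j D u"
  unfolding visc_super_def by blast

lemma main_bound:
  fixes \<Omega> :: "(real^'n) set" and u :: "real^'n \<Rightarrow> real \<Rightarrow> real" and g \<pi> :: "real^'n \<Rightarrow> real"
    and a w y :: "real^'n"
  assumes oO: "open \<Omega>" and bO: "bounded \<Omega>" and j1: "1 \<le> j" and jN: "j \<le> CARD('n)"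
    and sol: "visc_solution j \<Omega> g u0 u"
    and ab: "\<And>x. \<pi> x = a \<bullet> x + b" and w1: "norm w = 1"
    and gpi: "\<forall>x. x \<notin> \<Omega> \<and> x \<bullet> w > \<theta> \<longrightarrow> g x = \<pi> x"
    and uup: "\<And>x t. x \<in> closure \<Omega> \<Longrightarrow> 0 \<le> t \<Longrightarrow> u x t \<le> B"
    and ulo: "\<And>x t. x \<in> closure \<Omega> \<Longrightarrow> 0 \<le> t \<Longrightarrow> - B \<le> u x t"
    and B0: "B \<ge> 0"
    and Pb: "\<And>x. x \<in> closure \<Omega> \<Longrightarrow> \<bar>\<pi> x\<bar> \<le> P"
    and R: "\<And>x. x \<in> closure \<Omega> \<Longrightarrow> norm x \<le> R"
    and yO: "y \<in> \<Omega>" and yw: "y \<bullet> w > \<theta>"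
  shows "\<exists>ty>0. (j \<le> CARD('n) - 1 \<longrightarrow> (\<forall>t>ty. u y t \<le> \<pi> y)) \<and> (2 \<le> j \<longrightarrow> (\<forall>t>ty. u y t \<ge> \<pi> y))"
proof -
  have uc: "continuous_on (closure \<Omega> \<times> {0..}) (\<lambda>(x,t). u x t)" and sub: "visc_sub j \<Omega> u"
    and sup: "visc_super j \<Omega> u" and bd: "\<forall>x\<in>frontier \<Omega>. \<forall>t>0. u x t = g x"
    and ini: "\<forall>x\<in>closure \<Omega>. u x 0 = u0 x"
    using sol unfolding visc_solution_def by auto
  have yc: "y \<in> closure \<Omega>" using yO closure_subset by blast
  have P0: "P \<ge> 0" using Pb[OF yc] by simp
  define M where "M = B + P"
  have M0: "M \<ge> 0" using B0 P0 unfolding M_def by simp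
  have BM: "\<And>x. x \<in> closure \<Omega> \<Longrightarrow> B \<le> \<pi> x + M" using Pb unfolding M_def by (force simp: abs_le_iff)
  have BM2: "\<And>x. x \<in> closure \<Omega> \<Longrightarrow> \<pi> x - M \<le> - B" using Pb unfolding M_def by (force simp: abs_le_iff)
  define th where "th = (\<theta> + y \<bullet> w) / 2"
  have th: "\<theta> < th" "th < y \<bullet> w" using yw unfolding th_def by auto
  have R0: "R \<ge> 0" using R[OF yc] norm_ge_zero order_trans by blast
  define L where "L = 2 * R"
  have hL: "\<And>x. x \<in> closure \<Omega> \<Longrightarrow> norm (x - y) \<le> L"
  proof -
    fix x assume "x \<in> closure \<Omega>"
    then have "norm x \<le> R" by (rule R)
    moreover have "norm y \<le> R" by (rule R[OF yc])
    moreover have "norm (x - y) \<le> norm x + norm y" by (rule norm_triangle_ineq4)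
    ultimately show "norm (x - y) \<le> L" unfolding L_def by linarith
  qed
  define Ld where "Ld = R + \<bar>th\<bar> + 1"
  have hLd: "\<And>x. x \<in> closure \<Omega> \<Longrightarrow> x \<bullet> w - th \<le> Ld"
  proof -
    fix x assume "x \<in> closure \<Omega>"
    then have "norm x \<le> R" by (rule R)
    moreover have "x \<bullet> w \<le> norm x" using Cauchy_Schwarz_ineq2[of x w] w1 by simp
    ultimately show "x \<bullet> w - th \<le> Ld" unfolding Ld_def by linarith
  qed
  have Ld0: "Ld > 0" unfolding Ld_def using R0 by simp
  define C where "C = 8 * L^2 * Ld + 1"
  have "0 \<le> 8 * L^2 * Ld" using Ld0 by simp
  then have C0: "C > 0" unfolding C_def by linarith
  have CL: "8 * L^2 * Ld \<le> C" unfolding C_def by simp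
  define Q where "Q = L^2"
  define F where "F = Fb w th y C Q"
  have Fy: "F y = C / (y \<bullet> w - th) + Q" unfolding F_def Fb_def by simp
  define ty where "ty = F y + 1"
  have ty0: "ty > 0" unfolding ty_def Fy Q_def using C0 th by (simp add: add_pos_nonneg)
  define S where "S = {x::real^'n. th < x \<bullet> w}"
  have "S = {x. w \<bullet> x > th}" unfolding S_def by (auto simp: inner_commute)
  then have oS: "open S" using open_halfspace_gt by simp
  have Fd: "\<And>x. x \<in> S \<Longrightarrow> (F has_derivative (\<lambda>h. gF w th y C x \<bullet> h)) (at x)"
    unfolding F_def S_def by (rule Fb_deriv) simp
  have gd: "\<And>x. x \<in> S \<Longrightarrow> (gF w th y C has_derivative (\<lambda>h. HF w th C x *v h)) (at x)"
    unfolding S_def HF_mult by (rule gF_deriv) simp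
  have Fc: "continuous_on S F"
    unfolding F_def Fb_def[abs_def] S_def by (intro continuous_intros) auto
  have gc: "continuous_on S (gF w th y C)"
    unfolding gF_def[abs_def] S_def by (intro continuous_intros) auto
  have Hc: "continuous_on S (HF w th C)"
    unfolding HF_def[abs_def] S_def by (intro continuous_intros) auto
  have key: "(j \<le> CARD('n) - 1 \<longrightarrow> u y t \<le> \<pi> y + e * t) \<and> (2 \<le> j \<longrightarrow> \<pi> y - e * t \<le> u y t)"
    if t: "t > ty" and e: "e > 0" for t e
  proof -
    define T2 where "T2 = t + 1"
    define th2 where "th2 = th + min (C / T2) ((y \<bullet> w - th) / 2)"
    have T2p: "T2 > 0" unfolding T2_def using t ty0 by simp
    have th2a: "th < th2" unfolding th2_def using C0 T2p th by simp
    have th2b: "th2 < y \<bullet> w"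
    proof -
      have "min (C / T2) ((y \<bullet> w - th) / 2) \<le> (y \<bullet> w - th) / 2" by (rule min.cobounded2)
      then show ?thesis unfolding th2_def using th by argo
    qed
    have th2c: "C / (th2 - th) \<ge> T2"
    proof -
      have "th2 - th \<le> C / T2" unfolding th2_def by simp
      then have "(th2 - th) * T2 \<le> C" using T2p by (simp add: field_simps)
      then show ?thesis using th2a by (simp add: field_simps)
    qed
    define D where "D = \<Omega> \<inter> {x. w \<bullet> x > th2}"
    have oD: "open D" unfolding D_def using oO open_halfspace_gt by blast
    have bD: "bounded D" unfolding D_def using bO bounded_subset by blast
    have yD: "y \<in> D" unfolding D_def using yO th2b by (simp add: inner_commute)
    have DO: "D \<subseteq> \<Omega>" unfolding D_def by blast
    have clD: "closure D \<subseteq> closure \<Omega>" using DO closure_mono by blast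
    have clD2: "closure D \<subseteq> {x. w \<bullet> x \<ge> th2}"
      by (rule closure_minimal) (auto simp: D_def closed_halfspace_ge)
    have clS: "closure D \<subseteq> S" using clD2 th2a unfolding S_def by (auto simp: inner_commute)
    have subD: "visc_sub j D u" by (rule visc_sub_mono[OF DO sub])
    have supD: "visc_super j D u" by (rule visc_super_mono[OF DO sup])
    have ucD: "continuous_on (closure D \<times> {0..}) (\<lambda>(x,t). u x t)"
      using uc by (rule continuous_on_subset) (use clD in auto)
    have Fnn: "F x \<ge> 0" if "x \<in> closure D" for x
    proof -
      have xw: "x \<bullet> w - th > 0" using clS that unfolding S_def by auto
      have "(x - y) \<bullet> (x - y) = (norm (x - y))^2" by (simp add: power2_norm_eq_inner)
      also have "\<dots> \<le> L^2" using hL[of x] that clD norm_ge_zero by (intro power_mono) auto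
      finally have "(x - y) \<bullet> (x - y) \<le> Q" unfolding Q_def .
      moreover have "C / (x \<bullet> w - th) > 0" using C0 xw by simp
      ultimately show ?thesis unfolding F_def Fb_def by simp
    qed
    have Fcut: "F x \<ge> T2" if "x \<in> closure D" "w \<bullet> x = th2" for x
    proof -
      have "(x - y) \<bullet> (x - y) = (norm (x - y))^2" by (simp add: power2_norm_eq_inner)
      also have "\<dots> \<le> L^2" using hL[of x] that clD norm_ge_zero by (intro power_mono) auto
      finally have "(x - y) \<bullet> (x - y) \<le> Q" unfolding Q_def .
      moreover have "x \<bullet> w = th2" using that by (simp add: inner_commute)
      ultimately show ?thesis unfolding F_def Fb_def using th2c by simp
    qed
    have front: "x \<in> \<Omega> \<and> w \<bullet> x = th2 \<or> (x \<in> frontier \<Omega> \<and> x \<bullet> w > \<theta>)" if "x \<in> frontier D" for x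
    proof -
      have xc: "x \<in> closure D" and xi: "x \<notin> D" using that oD by (auto simp: frontier_def interior_open)
      have xw: "w \<bullet> x \<ge> th2" using xc clD2 by auto
      show ?thesis
      proof (cases "x \<in> \<Omega>")
        case True
        then have "w \<bullet> x = th2" using xi xw unfolding D_def by auto
        then show ?thesis using True by simp
      next
        case False
        then have "x \<in> frontier \<Omega>" using xc clD oO by (auto simp: frontier_def interior_open)
        moreover have "x \<bullet> w > \<theta>" using xw th2a th by (simp add: inner_commute)
        ultimately show ?thesis by simp
      qed
    qed
    have U: "open (D \<times> {0<..<T2})" "D \<times> {0<..<T2} \<subseteq> S \<times> UNIV"
      using oD clS closure_subset by (auto intro!: open_Times)
    have Vdim: "dim {v. gF w th y C x \<bullet> v = 0} \<ge> CARD('n) - 1" for x by (rule hyper_dim)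
    have quad: "HFv w th C x v \<bullet> v \<le> -1"
      if "x \<in> D" "gF w th y C x \<bullet> v = 0" "norm v = 1" for x v
    proof (rule quad_HF[OF that(2,3) C0 _ _ _ CL])
      have xc: "x \<in> closure D" using that(1) closure_subset by blast
      show "x \<bullet> w - th > 0" using clS xc unfolding S_def by auto
      show "x \<bullet> w - th \<le> Ld" using hLd xc clD by blast
      show "norm (x - y) \<le> L" using hL xc clD by blast
    qed
    have tyt: "t - F y \<ge> 1" using t unfolding ty_def by simp
    have upper: "u y t \<le> \<pi> y + e * t" if jlt: "j \<le> CARD('n) - 1"
    proof -
      have tf: "test_fun (\<lambda>x t. a \<bullet> x + b + 1 * (Gf M (t - F x) + e * t))
                 (\<lambda>x t. 1 * (G1 M (t - F x) + e))
                 (\<lambda>x t. a + (1 * - G1 M (t - F x)) *\<^sub>R gF w th y C x)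
                 (\<lambda>x t. 1 *\<^sub>R (G2 M (t - F x) *\<^sub>R outer (gF w th y C x) (gF w th y C x) - G1 M (t - F x) *\<^sub>R HF w th C x))
                 (D \<times> {0<..<T2})"
        by (rule barrier_test[OF U Fd gd Fc gc Hc])
      have cc0: "continuous_on (S \<times> UNIV) (\<lambda>(x, t). a \<bullet> x + b + 1 * (Gf M (t - F x) + e * t))"
        unfolding case_prod_beta' by (intro continuous_intros cont_fst_comp[OF Fc]) auto
      have cc: "continuous_on (closure D \<times> {0..T2}) (\<lambda>(x, t). a \<bullet> x + b + 1 * (Gf M (t - F x) + e * t))"
        using cc0 by (rule continuous_on_subset) (use clS in auto)
      have st: "1 * (G1 M (s - F x) + e) - eig j (1 *\<^sub>R (G2 M (s - F x) *\<^sub>R outer (gF w th y C x) (gF w th y C x) - G1 M (s - F x) *\<^sub>R HF w th C x)) > 0"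
        if "x \<in> D" "0 < s" "s < T2" for x s
      proof -
        let ?V = "{v. gF w th y C x \<bullet> v = 0}"
        have "j \<le> dim ?V" using Vdim[of x] jlt by linarith
        then obtain T where T: "subspace T" "T \<subseteq> span ?V" "dim T = j"
          by (rule choose_subspace_of_subspace)
        have sV: "span ?V = ?V" using subspace_hyperplane[of "gF w th y C x"] by (simp only: span_eq_iff)
        from T(2) have TV: "T \<subseteq> ?V" unfolding sV .
        have "eig j (1 *\<^sub>R (G2 M (s - F x) *\<^sub>R outer (gF w th y C x) (gF w th y C x) - G1 M (s - F x) *\<^sub>R HF w th C x)) \<le> G1 M (s - F x)"
        proof (rule eig_upper[OF j1 T(1) T(3)])
          fix v assume v: "v \<in> T" "norm v = 1"
          have gv: "gF w th y C x \<bullet> v = 0" using v TV by auto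
          have h: "HFv w th C x v \<bullet> v \<le> -1" by (rule quad[OF that(1) gv v(2)])
          have G: "G1 M (s - F x) \<le> 0" by (rule G1_nonpos[OF M0])
          have "((1 *\<^sub>R (G2 M (s - F x) *\<^sub>R outer (gF w th y C x) (gF w th y C x) - G1 M (s - F x) *\<^sub>R HF w th C x)) *v v) \<bullet> v
              = - 1 * G1 M (s - F x) * (HFv w th C x v \<bullet> v)" by (rule D2_quad[OF gv])
          also have "\<dots> \<le> G1 M (s - F x)"
          proof -
            have "0 \<le> (- G1 M (s - F x)) * (- (HFv w th C x v \<bullet> v) - 1)"
              using G h by (intro mult_nonneg_nonneg) auto
            then show ?thesis by (simp add: algebra_simps)
          qed
          finally show "((1 *\<^sub>R (G2 M (s - F x) *\<^sub>R outer (gF w th y C x) (gF w th y C x) - G1 M (s - F x) *\<^sub>R HF w th C x)) *v v) \<bullet> v \<le> G1 M (s - F x)" .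
        qed
        then show ?thesis using e by simp
      qed
      have bb: "u x s \<le> a \<bullet> x + b + 1 * (Gf M (s - F x) + e * s)"
        if "x \<in> frontier D" "0 < s" "s < T2" for x s
      proof -
        have xc: "x \<in> closure D" using that(1) by (simp add: frontier_def)
        have G0: "Gf M (s - F x) \<ge> 0" by (rule Gf_nonneg[OF M0])
        have es: "e * s \<ge> 0" using e that by simp
        from front[OF that(1)] show ?thesis
        proof
          assume A: "x \<in> \<Omega> \<and> w \<bullet> x = th2"
          have "s - F x \<le> 0" using Fcut[OF xc] A that by simp
          then have "Gf M (s - F x) \<ge> M" by (rule Gf_ge[OF M0])
          moreover have "u x s \<le> B" using uup[of x s] xc clD that by auto
          moreover have "B \<le> \<pi> x + M" using BM xc clD by auto
          ultimately show ?thesis using es ab[of x] by simp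
        next
          assume A: "x \<in> frontier \<Omega> \<and> x \<bullet> w > \<theta>"
          have "x \<notin> \<Omega>" using A oO by (simp add: frontier_def interior_open)
          then have "g x = \<pi> x" using gpi A by blast
          moreover have "u x s = g x" using bd A that by simp
          ultimately show ?thesis using G0 es ab[of x] by simp
        qed
      qed
      have ii: "u x 0 \<le> a \<bullet> x + b + 1 * (Gf M (0 - F x) + e * 0)" if "x \<in> closure D" for x
      proof -
        have "0 - F x \<le> 0" using Fnn[OF that] by simp
        then have "Gf M (0 - F x) \<ge> M" by (rule Gf_ge[OF M0])
        moreover have "u x 0 \<le> B" using uup[of x 0] that clD by auto
        moreover have "B \<le> \<pi> x + M" using BM that clD by auto
        ultimately show ?thesis using ab[of x] by simp
      qed
      have yDc: "y \<in> closure D" using yD closure_subset by blast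
      have t0: "0 \<le> t" "t < T2" using t ty0 unfolding T2_def by auto
      have "u y t \<le> a \<bullet> y + b + 1 * (Gf M (t - F y) + e * t)"
        by (rule comp_sub[OF oD bD subD ucD tf cc], (rule st, assumption+), (rule bb, assumption+),
            (rule ii, assumption), rule yDc, rule t0(1), rule t0(2))
      moreover have "Gf M (t - F y) = 0" by (rule Gf_zero[OF tyt])
      ultimately show ?thesis using ab[of y] by simp
    qed
    have lower: "\<pi> y - e * t \<le> u y t" if jge: "2 \<le> j"
    proof -
      have tf: "test_fun (\<lambda>x t. a \<bullet> x + b + (-1) * (Gf M (t - F x) + e * t))
                 (\<lambda>x t. (-1) * (G1 M (t - F x) + e))
                 (\<lambda>x t. a + ((-1) * - G1 M (t - F x)) *\<^sub>R gF w th y C x)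
                 (\<lambda>x t. (-1) *\<^sub>R (G2 M (t - F x) *\<^sub>R outer (gF w th y C x) (gF w th y C x) - G1 M (t - F x) *\<^sub>R HF w th C x))
                 (D \<times> {0<..<T2})"
        by (rule barrier_test[OF U Fd gd Fc gc Hc])
      have cc0: "continuous_on (S \<times> UNIV) (\<lambda>(x, t). a \<bullet> x + b + (-1) * (Gf M (t - F x) + e * t))"
        unfolding case_prod_beta' by (intro continuous_intros cont_fst_comp[OF Fc]) auto
      have cc: "continuous_on (closure D \<times> {0..T2}) (\<lambda>(x, t). a \<bullet> x + b + (-1) * (Gf M (t - F x) + e * t))"
        using cc0 by (rule continuous_on_subset) (use clS in auto)
      have st: "(-1) * (G1 M (s - F x) + e) - eig j ((-1) *\<^sub>R (G2 M (s - F x) *\<^sub>R outer (gF w th y C x) (gF w th y C x) - G1 M (s - F x) *\<^sub>R HF w th C x)) < 0"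
        if "x \<in> D" "0 < s" "s < T2" for x s
      proof -
        let ?V = "{v. gF w th y C x \<bullet> v = 0}"
        have dV: "dim ?V + j > CARD('n)" using Vdim[of x] jge by linarith
        have "eig j ((-1) *\<^sub>R (G2 M (s - F x) *\<^sub>R outer (gF w th y C x) (gF w th y C x) - G1 M (s - F x) *\<^sub>R HF w th C x)) \<ge> - G1 M (s - F x)"
        proof (rule eig_lower[OF jN subspace_hyperplane dV])
          fix v assume v: "v \<in> ?V" "norm v = 1"
          have gv: "gF w th y C x \<bullet> v = 0" using v by auto
          have h: "HFv w th C x v \<bullet> v \<le> -1" by (rule quad[OF that(1) gv v(2)])
          have G: "G1 M (s - F x) \<le> 0" by (rule G1_nonpos[OF M0])
          have "((( -1) *\<^sub>R (G2 M (s - F x) *\<^sub>R outer (gF w th y C x) (gF w th y C x) - G1 M (s - F x) *\<^sub>R HF w th C x)) *v v) \<bullet> v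
              = - (-1) * G1 M (s - F x) * (HFv w th C x v \<bullet> v)" by (rule D2_quad[OF gv])
          also have "\<dots> \<ge> - G1 M (s - F x)"
          proof -
            have "0 \<le> (- G1 M (s - F x)) * (- (HFv w th C x v \<bullet> v) - 1)"
              using G h by (intro mult_nonneg_nonneg) auto
            then show ?thesis by (simp add: algebra_simps)
          qed
          finally show "- G1 M (s - F x) \<le> (((-1) *\<^sub>R (G2 M (s - F x) *\<^sub>R outer (gF w th y C x) (gF w th y C x) - G1 M (s - F x) *\<^sub>R HF w th C x)) *v v) \<bullet> v" .
        qed
        then show ?thesis using e by simp
      qed
      have bb: "a \<bullet> x + b + (-1) * (Gf M (s - F x) + e * s) \<le> u x s"
        if "x \<in> frontier D" "0 < s" "s < T2" for x s
      proof -
        have xc: "x \<in> closure D" using that(1) by (simp add: frontier_def)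
        have G0: "Gf M (s - F x) \<ge> 0" by (rule Gf_nonneg[OF M0])
        have es: "e * s \<ge> 0" using e that by simp
        from front[OF that(1)] show ?thesis
        proof
          assume A: "x \<in> \<Omega> \<and> w \<bullet> x = th2"
          have "s - F x \<le> 0" using Fcut[OF xc] A that by simp
          then have "Gf M (s - F x) \<ge> M" by (rule Gf_ge[OF M0])
          moreover have "- B \<le> u x s" using ulo[of x s] xc clD that by auto
          moreover have "\<pi> x - M \<le> - B" using BM2 xc clD by auto
          ultimately show ?thesis using es ab[of x] by simp
        next
          assume A: "x \<in> frontier \<Omega> \<and> x \<bullet> w > \<theta>"
          have "x \<notin> \<Omega>" using A oO by (simp add: frontier_def interior_open)
          then have "g x = \<pi> x" using gpi A by blast
          moreover have "u x s = g x" using bd A that by simp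
          ultimately show ?thesis using G0 es ab[of x] by simp
        qed
      qed
      have ii: "a \<bullet> x + b + (-1) * (Gf M (0 - F x) + e * 0) \<le> u x 0" if "x \<in> closure D" for x
      proof -
        have "0 - F x \<le> 0" using Fnn[OF that] by simp
        then have "Gf M (0 - F x) \<ge> M" by (rule Gf_ge[OF M0])
        moreover have "- B \<le> u x 0" using ulo[of x 0] that clD by auto
        moreover have "\<pi> x - M \<le> - B" using BM2 that clD by auto
        ultimately show ?thesis using ab[of x] by simp
      qed
      have yDc: "y \<in> closure D" using yD closure_subset by blast
      have t0: "0 \<le> t" "t < T2" using t ty0 unfolding T2_def by auto
      have "a \<bullet> y + b + (-1) * (Gf M (t - F y) + e * t) \<le> u y t"
        by (rule comp_super[OF oD bD supD ucD tf cc], (rule st, assumption+), (rule bb, assumption+),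
            (rule ii, assumption), rule yDc, rule t0(1), rule t0(2))
      moreover have "Gf M (t - F y) = 0" by (rule Gf_zero[OF tyt])
      ultimately show ?thesis using ab[of y] by simp
    qed
    show ?thesis using upper lower by blast
  qed
  show ?thesis
  proof (intro exI[of _ ty] conjI impI allI ty0)
    fix t assume jlt: "j \<le> CARD('n) - 1" and t: "ty < t"
    have t0: "0 \<le> t" using t ty0 by simp
    show "u y t \<le> \<pi> y"
      by (rule eps_le[OF t0]) (use key[OF t] jlt in blast)
  next
    fix t assume jge: "2 \<le> j" and t: "ty < t"
    have t0: "0 \<le> t" using t ty0 by simp
    have "- u y t \<le> - \<pi> y"
    proof (rule eps_le[OF t0])
      fix e :: real assume "e > 0"
      then have "\<pi> y - e * t \<le> u y t" using key[OF t] jge by blast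
      then show "- u y t \<le> - \<pi> y + e * t" by simp
    qed
    then show "\<pi> y \<le> u y t" by simp
  qed
qed



theorem mainTheorem13:
  fixes \<Omega> :: "(real^'n) set" and j :: nat and u0 g \<pi> :: "real^'n \<Rightarrow> real"
    and u :: "real^'n \<Rightarrow> real \<Rightarrow> real" and w :: "real^'n" and \<theta> :: real
  assumes "open \<Omega>" and "connected \<Omega>" and "\<Omega> \<noteq> {}" and "bounded \<Omega>"
    and "1 \<le> j" and "j \<le> CARD('n)"
    and "cond_F j \<Omega>" and "cond_F (CARD('n) - j + 1) \<Omega>"
    and "continuous_on (closure \<Omega>) u0"
    and "continuous_on UNIV g"
    and "\<forall>x\<in>frontier \<Omega>. u0 x = g x"
    and "\<exists>a b. \<forall>x. \<pi> x = a \<bullet> x + b"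
    and "norm w = 1"
    and "\<forall>x. x \<notin> \<Omega> \<and> x \<bullet> w > \<theta> \<longrightarrow> g x = \<pi> x"
    and "visc_solution j \<Omega> g u0 u"
  shows "\<forall>y\<in>\<Omega>. y \<bullet> w > \<theta> \<longrightarrow> (\<exists>ty>0.
           (j \<le> CARD('n) - 1 \<longrightarrow> (\<forall>t>ty. u y t \<le> \<pi> y)) \<and>
           (2 \<le> j \<longrightarrow> (\<forall>t>ty. u y t \<ge> \<pi> y)) \<and>
           (2 \<le> j \<and> j \<le> CARD('n) - 1 \<longrightarrow> (\<forall>t>ty. u y t = \<pi> y)))"
proof (intro ballI impI)
  fix y assume yO: "y \<in> \<Omega>" and yw: "y \<bullet> w > \<theta>"
  obtain a b where ab: "\<And>x. \<pi> x = a \<bullet> x + b" using assms(12) by blast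
  have cO: "compact (closure \<Omega>)" using assms(4) by (simp add: compact_closure)
  have "bounded (u0 ` closure \<Omega>)"
    using compact_continuous_image[OF assms(9) cO] by (rule compact_imp_bounded)
  then obtain B1 where B1: "\<forall>z\<in>u0 ` closure \<Omega>. norm z \<le> B1" unfolding bounded_iff by blast
  have fc: "compact (frontier \<Omega>)" using assms(4) by (rule compact_frontier_bounded)
  have gfc: "continuous_on (frontier \<Omega>) g" using assms(10) by (rule continuous_on_subset) simp
  have "bounded (g ` frontier \<Omega>)"
    using compact_continuous_image[OF gfc fc] by (rule compact_imp_bounded)
  then obtain B2 where B2: "\<forall>z\<in>g ` frontier \<Omega>. norm z \<le> B2" unfolding bounded_iff by blast
  define B where "B = max 0 (max B1 B2)"
  have B0: "B \<ge> 0" unfolding B_def by simp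
  have Bu: "\<bar>u0 x\<bar> \<le> B" if "x \<in> closure \<Omega>" for x
  proof -
    have "norm (u0 x) \<le> B1" using B1 that by blast
    then show ?thesis unfolding B_def by simp
  qed
  have Bg: "\<bar>g x\<bar> \<le> B" if "x \<in> frontier \<Omega>" for x
  proof -
    have "norm (g x) \<le> B2" using B2 that by blast
    then show ?thesis unfolding B_def by simp
  qed
  have uup: "u x t \<le> B" if "x \<in> closure \<Omega>" "0 \<le> t" for x t
    using apriori_up[OF assms(1) assms(4) assms(5) assms(6) assms(15) Bu Bg that] by blast
  have ulo: "- B \<le> u x t" if "x \<in> closure \<Omega>" "0 \<le> t" for x t
    using apriori_lo[OF assms(1) assms(4) assms(5) assms(6) assms(15) Bu Bg that] by blast
  have "bounded (closure \<Omega>)" using assms(4) by (rule bounded_closure)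
  then obtain R where R0: "\<forall>x\<in>closure \<Omega>. norm x \<le> R" unfolding bounded_iff by blast
  have R: "norm x \<le> R" if "x \<in> closure \<Omega>" for x using R0 that by blast
  define P where "P = norm a * R + \<bar>b\<bar>"
  have Pb: "\<bar>\<pi> x\<bar> \<le> P" if "x \<in> closure \<Omega>" for x
  proof -
    have "\<bar>a \<bullet> x\<bar> \<le> norm a * norm x" by (rule Cauchy_Schwarz_ineq2)
    also have "\<dots> \<le> norm a * R" using R[OF that] by (intro mult_left_mono) auto
    finally have "\<bar>a \<bullet> x\<bar> \<le> norm a * R" .
    then show ?thesis unfolding P_def ab by linarith
  qed
  obtain ty where ty: "ty > 0" "j \<le> CARD('n) - 1 \<longrightarrow> (\<forall>t>ty. u y t \<le> \<pi> y)"
      "2 \<le> j \<longrightarrow> (\<forall>t>ty. u y t \<ge> \<pi> y)"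
    using main_bound[OF assms(1) assms(4) assms(5) assms(6) assms(15) ab assms(13) assms(14)
        uup ulo B0 Pb R yO yw] by blast
  show "\<exists>ty>0. (j \<le> CARD('n) - 1 \<longrightarrow> (\<forall>t>ty. u y t \<le> \<pi> y)) \<and>
           (2 \<le> j \<longrightarrow> (\<forall>t>ty. u y t \<ge> \<pi> y)) \<and>
           (2 \<le> j \<and> j \<le> CARD('n) - 1 \<longrightarrow> (\<forall>t>ty. u y t = \<pi> y))"
  proof (intro exI[of _ ty] conjI impI allI)
    fix t assume "2 \<le> j \<and> j \<le> CARD('n) - 1" "ty < t"
    then show "u y t = \<pi> y" using ty by (meson order_antisym)
  qed (use ty in auto)
qed

end
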